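(* Let $r\ge1$. For a regular semisimple $Z=\mathrm{diag}(\gamma_1,\dots,\gamma_{r+1})$ and $\Lambda(z)=\prod_{i=1}^{r+1}(z-a_i)$ with distinct roots, let ${\rm Fun}(r{\rm Op}_Z^{\Lambda})=\mathbb{C}(\gamma_i,p_i,a_i)/\mathrm{Wr}$, where $\mathrm{Wr}$ is the relation (coefficientwise in $z$) $$\det_{1\le i,j\le r+1}\big[(\gamma_i+\partial_z)^{j-1}(z-p_i)\big]=\prod_{i<j}(\gamma_j-\gamma_i)\cdot\prod_{i=1}^{r+1}(z-a_i).$$ Set $Z'=\mathrm{diag}(a_1,\dots,a_{r+1})$ and $\Lambda'(z)=\prod_{i=1}^{r+1}(z-\gamma_i)$, and define ${\rm Fun}(r{\rm Op}_{Z'}^{\Lambda'})=\mathbb{C}(a_i,p'_i,\gamma_i)/\mathrm{Wr}'$ with $\mathrm{Wr}'$ the same relation with the roles of $(\gamma_i,p_i,a_i)$ replaced by $(a_i,p'_i,\gamma_i)$. Then $${\rm Fun}(r{\rm Op}_Z^{\Lambda})\cong{\rm Fun}(r{\rm Op}_{Z'}^{\Lambda'}).$$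
   Context: ${\rm Fun}(r{\rm Op}_Z^{\Lambda})$ is the algebra of functions on the space of canonical rationally $Z$-twisted Miura $SL(r+1)$-opers on $\mathbb{P}^1$: the oper connection is gauge equivalent to the constant connection $\partial_z+Z$, $Z$ is regular semisimple, the section of the line subbundle has components $s_i(z)=z-p_i$, and the only regular singularities are the distinct roots of $\Lambda$, equal (up to the constant Vandermonde factor) to the twisted Wronskian $\det[(\gamma_i+\partial_z)^{j-1}s_i]$. The dual space uses twist $Z'$ and singularity polynomial $\Lambda'$, i.e. twist parameters and singularity positions are interchanged. *)

theory Defs
  imports "Jordan_Normal_Form.Determinant" "HOL-Computational_Algebra.Polynomial"
begin

text \<open>Coordinates of the ambient affine space: twist parameters G i (gamma_i),
  Miura-oper section roots P i (p_i), singularity positions A i (a_i), i = 0..r.\<close>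
datatype var = G nat | P nat | A nat

definition twisted_der_pow :: "complex \<Rightarrow> nat \<Rightarrow> complex poly \<Rightarrow> complex poly" where
  "twisted_der_pow c j q = ((\<lambda>f. smult c f + pderiv f) ^^ j) q"

definition twisted_wronskian :: "nat \<Rightarrow> (nat \<Rightarrow> complex) \<Rightarrow> (nat \<Rightarrow> complex) \<Rightarrow> complex poly" where
  "twisted_wronskian r \<gamma> p =
     det (mat (Suc r) (Suc r) (\<lambda>(i, j). twisted_der_pow (\<gamma> i) j [:- p i, 1:]))"

definition Wr :: "nat \<Rightarrow> (nat \<Rightarrow> complex) \<Rightarrow> (nat \<Rightarrow> complex) \<Rightarrow> (nat \<Rightarrow> complex) \<Rightarrow> bool" where
  "Wr r \<gamma> p a \<longleftrightarrow>
     twisted_wronskian r \<gamma> p =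
       smult (\<Prod>j\<in>{..r}. \<Prod>i\<in>{..<j}. \<gamma> j - \<gamma> i) (\<Prod>i\<in>{..r}. [:- a i, 1:])"

text \<open>Coordinates that are actually used (i \<le> r); the others are normalised to 0.\<close>
fun used_var :: "nat \<Rightarrow> var \<Rightarrow> bool" where
  "used_var r (G i) = (i \<le> r)"
| "used_var r (P i) = (i \<le> r)"
| "used_var r (A i) = (i \<le> r)"

text \<open>Space of canonical rationally Z-twisted Miura SL(r+1)-opers with
  Z = diag(gamma) regular semisimple and Lambda = prod (z - a_i) with distinct roots.\<close>
definition rOp :: "nat \<Rightarrow> (var \<Rightarrow> complex) set" where
  "rOp r = {v. (\<forall>k. \<not> used_var r k \<longrightarrow> v k = 0)
              \<and> inj_on (\<lambda>i. v (G i)) {..r} \<and> inj_on (\<lambda>i. v (A i)) {..r}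
              \<and> Wr r (\<lambda>i. v (G i)) (\<lambda>i. v (P i)) (\<lambda>i. v (A i))}"

text \<open>Dual space: twist Z' = diag(a), singularities at the gamma_i; here the
  P-coordinates are the dual section roots p'_i.\<close>
definition rOp_dual :: "nat \<Rightarrow> (var \<Rightarrow> complex) set" where
  "rOp_dual r = {v. (\<forall>k. \<not> used_var r k \<longrightarrow> v k = 0)
              \<and> inj_on (\<lambda>i. v (A i)) {..r} \<and> inj_on (\<lambda>i. v (G i)) {..r}
              \<and> Wr r (\<lambda>i. v (A i)) (\<lambda>i. v (P i)) (\<lambda>i. v (G i))}"

inductive_set polyfun :: "((var \<Rightarrow> complex) \<Rightarrow> complex) set" where
  const: "(\<lambda>v. c) \<in> polyfun"
| coord: "(\<lambda>v. v k) \<in> polyfun"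
| add: "f \<in> polyfun \<Longrightarrow> g \<in> polyfun \<Longrightarrow> (\<lambda>v. f v + g v) \<in> polyfun"
| mult: "f \<in> polyfun \<Longrightarrow> g \<in> polyfun \<Longrightarrow> (\<lambda>v. f v * g v) \<in> polyfun"

definition restr :: "(var \<Rightarrow> complex) set \<Rightarrow> ((var \<Rightarrow> complex) \<Rightarrow> complex) \<Rightarrow> (var \<Rightarrow> complex) \<Rightarrow> complex" where
  "restr S f = (\<lambda>v. if v \<in> S then f v else 0)"

definition Fun :: "(var \<Rightarrow> complex) set \<Rightarrow> ((var \<Rightarrow> complex) \<Rightarrow> complex) set" where
  "Fun S = {f. (\<forall>v. v \<notin> S \<longrightarrow> f v = 0)
              \<and> (\<exists>g\<in>polyfun. \<exists>h\<in>polyfun. \<forall>v\<in>S. h v \<noteq> 0 \<and> f v = g v / h v)}"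

definition Fun_iso :: "(var \<Rightarrow> complex) set \<Rightarrow> (var \<Rightarrow> complex) set
    \<Rightarrow> (((var \<Rightarrow> complex) \<Rightarrow> complex) \<Rightarrow> ((var \<Rightarrow> complex) \<Rightarrow> complex)) \<Rightarrow> nat \<Rightarrow> bool" where
  "Fun_iso S S' T r \<longleftrightarrow>
     bij_betw T (Fun S) (Fun S')
     \<and> (\<forall>f\<in>Fun S. \<forall>g\<in>Fun S. T (\<lambda>v. f v + g v) = (\<lambda>v. T f v + T g v))
     \<and> (\<forall>f\<in>Fun S. \<forall>g\<in>Fun S. T (\<lambda>v. f v * g v) = (\<lambda>v. T f v * T g v))
     \<and> (\<forall>c. T (restr S (\<lambda>v. c)) = restr S' (\<lambda>v. c))
     \<and> (\<forall>i\<le>r. T (restr S (\<lambda>v. v (G i))) = restr S' (\<lambda>v. v (G i)))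
     \<and> (\<forall>i\<le>r. T (restr S (\<lambda>v. v (A i))) = restr S' (\<lambda>v. v (A i)))"

end

theory Submission
  imports Defs "Jordan_Normal_Form.Char_Poly"
begin
lemma mult_entry:
  assumes "M1 \<in> carrier_mat n m" "M2 \<in> carrier_mat m k" "i < n" "j < k"
  shows "(M1 * M2) $$ (i,j) = (\<Sum>l<m. M1 $$ (i,l) * M2 $$ (l,j))"
  using assms by (auto simp: index_mult_mat scalar_prod_def lessThan_atLeast0 intro!: sum.cong)

lemma prod_list_map_upt: "prod_list (map f [0..<n]) = (\<Prod>i<n. f i)"
  by (induct n) (auto simp: ac_simps)

lemma det_diag_mat:
  "det (mat n n (\<lambda>(i,j). if i = j then d i else 0)) = (\<Prod>i<n. (d i :: 'a :: comm_ring_1))"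
proof -
  have "upper_triangular (mat n n (\<lambda>(i,j). if i = j then d i else 0))"
    unfolding upper_triangular_def by auto
  then have "det (mat n n (\<lambda>(i,j). if i = j then d i else 0)) =
     prod_list (diag_mat (mat n n (\<lambda>(i,j). if i = j then d i else 0)))"
    by (rule det_upper_triangular) auto
  also have "\<dots> = prod_list (map d [0..<n])"
    unfolding diag_mat_def by (auto intro!: arg_cong[where f=prod_list])
  finally show ?thesis by (simp add: prod_list_map_upt)
qed

definition Vand :: "nat \<Rightarrow> (nat \<Rightarrow> 'a::comm_ring_1) \<Rightarrow> 'a mat" where
  "Vand n g = mat (Suc n) (Suc n) (\<lambda>(i,j). g i ^ j)"

lemma Vand_carrier[simp]: "Vand n g \<in> carrier_mat (Suc n) (Suc n)"
  by (simp add: Vand_def)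

lemma vandermonde: "det (Vand n (g :: nat \<Rightarrow> 'a :: comm_ring_1)) = (\<Prod>j\<le>n. \<Prod>i<j. g j - g i)"
proof (induct n arbitrary: g)
  case 0
  have "det (Vand 0 g) = Vand 0 g $$ (0,0)"
    by (rule det_single) simp
  then show ?case by (simp add: Vand_def)
next
  case (Suc n)
  define N where "N = Suc (Suc n)"
  define M where "M = Vand (Suc n) g"
  define E :: "'a mat" where "E = mat N N (\<lambda>(k,j). if k = j then 1 else if Suc k = j then - g 0 else 0)"
  have M: "M \<in> carrier_mat N N" unfolding M_def N_def by simp
  have E: "E \<in> carrier_mat N N" unfolding E_def by simp
  have detE: "det E = 1"
  proof -
    have "upper_triangular E" unfolding upper_triangular_def E_def by auto
    then have "det E = prod_list (diag_mat E)" by (rule det_upper_triangular[OF _ E])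
    also have "diag_mat E = map (\<lambda>_. 1) [0..<N]" unfolding diag_mat_def E_def by auto
    finally show ?thesis by (simp add: prod_list_map_upt)
  qed
  have ME: "(M * E) $$ (i,j) = g i ^ j - (if j = 0 then 0 else g 0 * g i ^ (j - 1))" if "i < N" "j < N" for i j
  proof -
    have "(M * E) $$ (i,j) = (\<Sum>l<N. M $$ (i,l) * E $$ (l,j))"
      by (rule mult_entry[OF M E that])
    also have "\<dots> = (\<Sum>l<N. (if l = j then g i ^ l else 0) + (if Suc l = j then - g 0 * g i ^ l else 0))"
      using that by (intro sum.cong) (auto simp: M_def E_def Vand_def N_def)
    also have "\<dots> = g i ^ j - (if j = 0 then 0 else g 0 * g i ^ (j - 1))"
      using that by (cases j) (auto simp: sum.distrib)
    finally show ?thesis .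
  qed
  have MEc: "M * E \<in> carrier_mat N N" using M E by simp
  have "det M = det (M * E)" using det_mult[OF M E] detE by simp
  also have "\<dots> = (\<Sum>j<N. (M * E) $$ (0,j) * cofactor (M * E) 0 j)"
    by (rule laplace_expansion_row[OF MEc]) (simp add: N_def)
  also have "\<dots> = (\<Sum>j<N. (if j = 0 then cofactor (M * E) 0 0 else 0))"
    by (intro sum.cong refl) (auto simp: ME N_def power_eq_if)
  also have "\<dots> = det (mat_delete (M * E) 0 0)" by (simp add: N_def cofactor_def)
  also have "mat_delete (M * E) 0 0 =
     mat (Suc n) (Suc n) (\<lambda>(i,j). if i = j then g (Suc i) - g 0 else 0) * Vand n (g \<circ> Suc)"
    (is "_ = ?D * ?V")
  proof (rule eq_matI)
    fix i j assume ij: "i < dim_row (?D * ?V)" "j < dim_col (?D * ?V)"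
    then have ij': "i < Suc n" "j < Suc n" by (auto simp: Vand_def)
    have "(?D * ?V) $$ (i,j) = (\<Sum>l<Suc n. ?D $$ (i,l) * ?V $$ (l,j))"
      by (rule mult_entry[OF _ _ ij']) auto
    also have "\<dots> = (\<Sum>l<Suc n. if l = i then (g (Suc i) - g 0) * g (Suc i) ^ j else 0)"
      using ij' by (intro sum.cong) (auto simp: Vand_def)
    also have "\<dots> = (g (Suc i) - g 0) * g (Suc i) ^ j" using ij' by simp
    finally have r: "(?D * ?V) $$ (i,j) = (g (Suc i) - g 0) * g (Suc i) ^ j" .
    have "mat_delete (M * E) 0 0 $$ (i,j) = (M * E) $$ (Suc i, Suc j)"
      using ij' M E unfolding mat_delete_def N_def by auto
    also have "\<dots> = (g (Suc i) - g 0) * g (Suc i) ^ j"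
      using ij' by (subst ME) (auto simp: N_def algebra_simps)
    finally show "mat_delete (M * E) 0 0 $$ (i,j) = (?D * ?V) $$ (i,j)" using r by simp
  qed (use MEc N_def in \<open>auto simp: Vand_def\<close>)
  also have "det (?D * ?V) = det ?D * det ?V"
    by (rule det_mult[of _ "Suc n"]) auto
  also have "det ?D = (\<Prod>i<Suc n. g (Suc i) - g 0)" by (rule det_diag_mat)
  also have "det ?V = (\<Prod>j\<le>n. \<Prod>i<j. g (Suc j) - g (Suc i))" using Suc by simp
  also have "(\<Prod>i<Suc n. g (Suc i) - g 0) * (\<Prod>j\<le>n. \<Prod>i<j. g (Suc j) - g (Suc i))
      = (\<Prod>j\<le>Suc n. \<Prod>i<j. g j - g i)"
  proof -
    have "(\<Prod>j\<le>Suc n. \<Prod>i<j. g j - g i) = (\<Prod>j\<le>n. \<Prod>i<Suc j. g (Suc j) - g i)"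
      by (simp only: prod.atMost_Suc_shift) simp
    also have "\<dots> = (\<Prod>j\<le>n. (g (Suc j) - g 0) * (\<Prod>i<j. g (Suc j) - g (Suc i)))"
      by (simp only: prod.lessThan_Suc_shift)
    also have "\<dots> = (\<Prod>i<Suc n. g (Suc i) - g 0) * (\<Prod>j\<le>n. \<Prod>i<j. g (Suc j) - g (Suc i))"
      by (simp only: prod.distrib lessThan_Suc_atMost)
    finally show ?thesis by simp
  qed
  finally show ?case unfolding M_def .
qed

definition wt :: "nat \<Rightarrow> (nat \<Rightarrow> complex) \<Rightarrow> nat \<Rightarrow> complex" where
  "wt r g k = (\<Prod>m\<in>{..r}-{k}. g k - g m)"

definition Lpoly :: "nat \<Rightarrow> (nat \<Rightarrow> complex) \<Rightarrow> nat \<Rightarrow> complex poly" where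
  "Lpoly r g k = (\<Prod>m\<in>{..r}-{k}. [:- g m, 1:])"

definition Cm :: "nat \<Rightarrow> (nat \<Rightarrow> complex) \<Rightarrow> nat \<Rightarrow> nat \<Rightarrow> complex" where
  "Cm r g i k = poly (pderiv (Lpoly r g k)) (g i) / wt r g k"

lemma wt_nonzero: assumes "inj_on g {..r}" "k \<le> r" shows "wt r g k \<noteq> 0"
  using assms unfolding wt_def by (auto simp: inj_on_def)

lemma poly_Lpoly: assumes "inj_on g {..r}" "i \<le> r" "k \<le> r"
  shows "poly (Lpoly r g k) (g i) = (if i = k then wt r g k else 0)"
  using assms unfolding Lpoly_def wt_def by (auto simp: poly_prod prod_zero_iff)

lemma degree_Lpoly: assumes "k \<le> r" shows "degree (Lpoly r g k) \<le> r"
proof -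
  have "degree (Lpoly r g k) \<le> sum (degree \<circ> (\<lambda>m. [:- g m, 1:])) ({..r}-{k})"
    unfolding Lpoly_def by (rule degree_prod_sum_le) simp
  also have "\<dots> = card ({..r}-{k})" by simp
  also have "\<dots> \<le> r" using assms by (auto simp: card_Diff_singleton)
  finally show ?thesis .
qed

lemma interp: assumes inj: "inj_on g {..r}" and j: "j \<le> r"
  shows "(\<Sum>k\<le>r. smult (g k ^ j / wt r g k) (Lpoly r g k)) = monom 1 j"
proof (rule poly_eqI_degree[where A = "g ` {..r}"])
  fix x assume "x \<in> g ` {..r}"
  then obtain i where i: "i \<le> r" "x = g i" by auto
  have "poly (\<Sum>k\<le>r. smult (g k ^ j / wt r g k) (Lpoly r g k)) x
      = (\<Sum>k\<le>r. (g k ^ j / wt r g k) * (if i = k then wt r g k else 0))"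
    using i inj by (simp add: poly_sum poly_Lpoly)
  also have "\<dots> = (\<Sum>k\<le>r. if k = i then g i ^ j else 0)"
    by (intro sum.cong refl) (auto simp: wt_nonzero[OF inj])
  also have "\<dots> = g i ^ j" using i by simp
  finally show "poly (\<Sum>k\<le>r. smult (g k ^ j / wt r g k) (Lpoly r g k)) x = poly (monom 1 j) x"
    using i by (simp add: poly_monom)
next
  have c: "card (g ` {..r}) = Suc r" using inj by (simp add: card_image)
  have "degree (\<Sum>k\<le>r. smult (g k ^ j / wt r g k) (Lpoly r g k)) \<le> r"
  proof (rule degree_sum_le)
    fix k assume "k \<in> {..r}"
    then show "degree (smult (g k ^ j / wt r g k) (Lpoly r g k)) \<le> r"
      by (meson atMost_iff degree_Lpoly degree_smult_le order_trans)
  qed simp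
  then show "degree (\<Sum>k\<le>r. smult (g k ^ j / wt r g k) (Lpoly r g k)) < card (g ` {..r})"
    using c by simp
  show "degree (monom (1::complex) j) < card (g ` {..r})" using c j by (simp add: degree_monom_eq)
qed

lemma C_vand: assumes inj: "inj_on g {..r}" and j: "j \<le> r" and i: "i \<le> r"
  shows "(\<Sum>k\<le>r. Cm r g i k * g k ^ j) = of_nat j * g i ^ (j - 1)"
proof -
  have "poly (pderiv (\<Sum>k\<le>r. smult (g k ^ j / wt r g k) (Lpoly r g k))) (g i) = 
        poly (pderiv (monom 1 j)) (g i)" using interp[OF inj j] by simp
  then show ?thesis
    by (simp add: pderiv_sum pderiv_smult poly_sum pderiv_monom poly_monom Cm_def field_simps)
qed

lemma poly_pderiv_Lpoly:
  "poly (pderiv (Lpoly r g k)) x = (\<Sum>m\<in>{..r}-{k}. \<Prod>l\<in>{..r}-{k}-{m}. x - g l)"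
  unfolding Lpoly_def pderiv_prod by (simp add: poly_sum poly_prod pderiv_pCons)

lemma C_offdiag: assumes inj: "inj_on g {..r}" and ik: "i \<noteq> k" "i \<le> r" "k \<le> r"
  shows "(g i - g k) * Cm r g i k = wt r g i / wt r g k"
proof -
  have "(\<Sum>m\<in>{..r}-{k}. \<Prod>l\<in>{..r}-{k}-{m}. g i - g l) = 
        (\<Sum>m\<in>{..r}-{k}. if m = i then (\<Prod>l\<in>{..r}-{k}-{i}. g i - g l) else 0)"
  proof (intro sum.cong refl)
    fix m assume m: "m \<in> {..r}-{k}"
    show "(\<Prod>l\<in>{..r}-{k}-{m}. g i - g l) = (if m = i then (\<Prod>l\<in>{..r}-{k}-{i}. g i - g l) else 0)"
    proof (cases "m = i")
      case False
      then have "i \<in> {..r}-{k}-{m}" using ik by auto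
      then show ?thesis using False by (auto simp: prod_zero_iff)
    qed simp
  qed
  also have "\<dots> = (\<Prod>l\<in>{..r}-{k}-{i}. g i - g l)" using ik by simp
  finally have e: "poly (pderiv (Lpoly r g k)) (g i) = (\<Prod>l\<in>{..r}-{k}-{i}. g i - g l)"
    unfolding poly_pderiv_Lpoly .
  have s: "{..r}-{i} = insert k ({..r}-{k}-{i})" using ik by auto
  have "wt r g i = (g i - g k) * (\<Prod>l\<in>{..r}-{k}-{i}. g i - g l)"
    unfolding wt_def s by (subst prod.insert) auto
  then show ?thesis unfolding Cm_def e using wt_nonzero[OF inj ik(3)] by simp
qed

definition Xm :: "nat \<Rightarrow> (nat \<Rightarrow> complex) \<Rightarrow> (nat \<Rightarrow> complex) \<Rightarrow> complex mat" where
  "Xm r g p = mat (Suc r) (Suc r) (\<lambda>(i,k). (if i = k then p i else 0) - Cm r g i k)"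

lemma Xm_carrier[simp]: "Xm r g p \<in> carrier_mat (Suc r) (Suc r)"
  by (simp add: Xm_def)

lemma Xm_dims[simp]: "dim_row (Xm r g p) = Suc r" "dim_col (Xm r g p) = Suc r"
  by (simp_all add: Xm_def)

lemma tdp: "twisted_der_pow c j [:- q, 1:] = [: - q * c ^ j + of_nat j * c ^ (j - 1), c ^ j :]"
proof (induct j)
  case 0
  then show ?case by (simp add: twisted_der_pow_def)
next
  case (Suc j)
  have "twisted_der_pow c (Suc j) [:- q, 1:] = smult c (twisted_der_pow c j [:- q, 1:]) + pderiv (twisted_der_pow c j [:- q, 1:])"
    by (simp add: twisted_der_pow_def)
  also have "\<dots> = [: - q * c ^ Suc j + of_nat (Suc j) * c ^ (Suc j - 1), c ^ Suc j :]"
    unfolding Suc by (cases j) (auto simp: pderiv_pCons algebra_simps)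
  finally show ?case .
qed

interpretation cph: comm_ring_hom "(\<lambda>a::complex. [:a:])" by unfold_locales auto

lemma wronskian_charpoly: assumes inj: "inj_on g {..r}"
  shows "twisted_wronskian r g p = smult (\<Prod>j\<le>r. \<Prod>i<j. g j - g i) (char_poly (Xm r g p))"
proof -
  let ?N = "Suc r"
  let ?X = "Xm r g p"
  let ?CP = "char_poly_matrix ?X"
  let ?V = "map_mat (\<lambda>a. [:a:]) (Vand r g)"
  have CP: "?CP \<in> carrier_mat ?N ?N" by simp
  have V: "?V \<in> carrier_mat ?N ?N" by simp
  have eq: "mat ?N ?N (\<lambda>(i, j). twisted_der_pow (g i) j [:- p i, 1:]) = ?CP * ?V"
  proof (rule eq_matI)
    fix i j assume ij: "i < dim_row (?CP * ?V)" "j < dim_col (?CP * ?V)"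
    then have ij': "i < ?N" "j < ?N" using CP V by (auto simp: Vand_def)
    have "(?CP * ?V) $$ (i,j) = (\<Sum>l<?N. ?CP $$ (i,l) * ?V $$ (l,j))"
      by (rule mult_entry[OF CP V ij'])
    also have "\<dots> = (\<Sum>l<?N. (if l = i then [:0, g i ^ j:] else 0) + [: - (?X $$ (i,l) * g l ^ j) :])"
      using ij' by (intro sum.cong refl) (auto simp: char_poly_matrix_def Vand_def)
    also have "\<dots> = [:0, g i ^ j:] + [: - (\<Sum>l<?N. ?X $$ (i,l) * g l ^ j) :]"
      using ij' by (simp add: sum.distrib sum_to_poly sum_negf)
    also have "(\<Sum>l<?N. ?X $$ (i,l) * g l ^ j) = (\<Sum>l<?N. (if l = i then p i * g i ^ j else 0) - Cm r g i l * g l ^ j)"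
      using ij' by (intro sum.cong refl) (auto simp: Xm_def algebra_simps)
    also have "\<dots> = p i * g i ^ j - (\<Sum>l\<le>r. Cm r g i l * g l ^ j)"
      using ij' by (simp add: sum_subtractf lessThan_Suc_atMost)
    also have "(\<Sum>l\<le>r. Cm r g i l * g l ^ j) = of_nat j * g i ^ (j - 1)"
      using ij' by (intro C_vand[OF inj]) auto
    finally have "(?CP * ?V) $$ (i,j) = [: - p i * g i ^ j + of_nat j * g i ^ (j - 1), g i ^ j :]"
      by simp
    then show "mat ?N ?N (\<lambda>(i, j). twisted_der_pow (g i) j [:- p i, 1:]) $$ (i,j) = (?CP * ?V) $$ (i,j)"
      using ij' by (subst index_mat; simp only: prod.case tdp ij')
  qed (use CP V in \<open>auto simp: Vand_def char_poly_matrix_def\<close>)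
  have "twisted_wronskian r g p = det (?CP * ?V)" unfolding twisted_wronskian_def eq ..
  also have "\<dots> = det ?CP * det ?V" by (rule det_mult[OF CP V])
  also have "\<dots> = char_poly ?X * [: det (Vand r g) :]" by (simp add: char_poly_def)
  finally show ?thesis by (simp add: vandermonde)
qed

lemma vdet_nonzero: assumes inj: "inj_on g {..r}"
  shows "(\<Prod>j\<le>r. \<Prod>i<j. g j - g (i::nat)) \<noteq> (0::complex)"
proof -
  have "g j - g i \<noteq> 0" if "j \<le> r" "i < j" for i j
    using inj that unfolding inj_on_def by (metis atMost_iff less_imp_le order_trans right_minus_eq less_irrefl)
  then show ?thesis by (auto simp: prod_zero_iff)
qed

lemma Wr_iff: assumes inj: "inj_on g {..r}"
  shows "Wr r g p a \<longleftrightarrow> char_poly (Xm r g p) = (\<Prod>i\<le>r. [:- a i, 1:])"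
  unfolding Wr_def wronskian_charpoly[OF inj]
  using smult_cancel[OF vdet_nonzero[OF inj]] by auto

lemma mult_vec_entry:
  assumes "M \<in> carrier_mat n n" "v \<in> carrier_vec n" "k < n"
  shows "(M *\<^sub>v v) $ k = (\<Sum>l<n. M $$ (k,l) * v $ l)"
  using assms by (auto simp: scalar_prod_def lessThan_atLeast0 intro!: sum.cong)

lemma indep:
  assumes ev: "\<And>i k. i < n \<Longrightarrow> k < n \<Longrightarrow> (\<Sum>l<n. X $$ (k,l) * u i l) = a i * u i k"
  and nz: "\<And>i. i < n \<Longrightarrow> \<exists>k<n. u i k \<noteq> (0::complex)"
  and inj: "inj_on a {..<n}"
  shows "m \<le> n \<Longrightarrow> (\<And>k. k < n \<Longrightarrow> (\<Sum>i<m. c i * u i k) = 0) \<Longrightarrow> i < m \<Longrightarrow> c i = 0"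
proof (induct m arbitrary: c i)
  case 0
  then show ?case by simp
next
  case (Suc m)
  note h = Suc.prems(2)
  have h2: "(\<Sum>i<Suc m. c i * a i * u i k) = 0" if k: "k < n" for k
  proof -
    have "0 = (\<Sum>l<n. X $$ (k,l) * (\<Sum>i<Suc m. c i * u i l))" using h by simp
    also have "\<dots> = (\<Sum>i<Suc m. c i * (\<Sum>l<n. X $$ (k,l) * u i l))"
      by (simp only: sum_distrib_left sum.swap[of _ "{..<n}"] mult.left_commute)
    also have "\<dots> = (\<Sum>i<Suc m. c i * a i * u i k)"
      using Suc.prems(1) k by (intro sum.cong refl) (auto simp: ev)
    finally show ?thesis by simp
  qed
  have h3: "(\<Sum>i<m. (c i * (a i - a m)) * u i k) = 0" if k: "k < n" for k
  proof -
    have "(\<Sum>i<Suc m. (c i * (a i - a m)) * u i k) = (\<Sum>i<Suc m. c i * a i * u i k) - a m * (\<Sum>i<Suc m. c i * u i k)"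
      by (simp add: algebra_simps sum_subtractf sum_distrib_left)
    also have "\<dots> = 0" using h2[OF k] h[OF k] by simp
    finally show ?thesis by simp
  qed
  have cz: "c i = 0" if "i < m" for i
  proof -
    have "c i * (a i - a m) = 0"
      using Suc.hyps[of "\<lambda>i. c i * (a i - a m)" i] Suc.prems(1) h3 that by auto
    moreover have "a i \<noteq> a m" using inj that Suc.prems(1) unfolding inj_on_def by fastforce
    ultimately show ?thesis by simp
  qed
  obtain k where k: "k < n" "u m k \<noteq> 0" using nz[of m] Suc.prems(1) by (auto simp: Suc_le_eq)
  have "(\<Sum>i<Suc m. c i * u i k) = c m * u m k" using cz by simp
  then have "c m = 0" using h[OF k(1)] k(2) by simp
  then show ?case using cz Suc.prems(3) less_Suc_eq by auto
qed

definition diagm :: "nat \<Rightarrow> (nat \<Rightarrow> complex) \<Rightarrow> complex mat" where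
  "diagm n d = mat n n (\<lambda>(i,j). if i = j then d i else 0)"

lemma diagm_carrier[simp]: "diagm n d \<in> carrier_mat n n" by (simp add: diagm_def)
lemma diagm_dims[simp]: "dim_row (diagm n d) = n" "dim_col (diagm n d) = n" by (simp_all add: diagm_def)

lemma eig_exists:
  assumes X: "X \<in> carrier_mat (Suc r) (Suc r)"
  and cp: "char_poly X = (\<Prod>i\<le>r. [:- a i, 1:])"
  and inj: "inj_on a {..r}"
  shows "\<exists>U Ui. U \<in> carrier_mat (Suc r) (Suc r) \<and> Ui \<in> carrier_mat (Suc r) (Suc r) \<and>
     U * Ui = 1\<^sub>m (Suc r) \<and> Ui * U = 1\<^sub>m (Suc r) \<and> X * U = U * diagm (Suc r) a"
proof -
  let ?n = "Suc r"
  have "\<exists>v. eigenvector X v (a i)" if "i \<le> r" for i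
  proof -
    have "poly (char_poly X) (a i) = 0" unfolding cp using that
      by (auto simp: poly_prod prod_zero_iff)
    then have "eigenvalue X (a i)" using eigenvalue_root_char_poly[OF X] by simp
    then show ?thesis unfolding eigenvalue_def .
  qed
  then obtain u where u: "\<And>i. i \<le> r \<Longrightarrow> eigenvector X (u i) (a i)" by metis
  have uc: "u i \<in> carrier_vec ?n" "u i \<noteq> 0\<^sub>v ?n" "X *\<^sub>v u i = a i \<cdot>\<^sub>v u i" if "i \<le> r" for i
    using u[OF that] X unfolding eigenvector_def by auto
  define U where "U = mat ?n ?n (\<lambda>(k,i). u i $ k)"
  have Uc: "U \<in> carrier_mat ?n ?n" unfolding U_def by simp
  have ev: "(\<Sum>l<?n. X $$ (k,l) * u i $ l) = a i * u i $ k" if "i < ?n" "k < ?n" for i k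
  proof -
    have "(X *\<^sub>v u i) $ k = (\<Sum>l<?n. X $$ (k,l) * u i $ l)"
      by (rule mult_vec_entry[OF X uc(1)]) (use that in auto)
    then show ?thesis using uc(3)[of i] uc(1)[of i] that by auto
  qed
  have nz: "\<exists>k<?n. u i $ k \<noteq> 0" if "i < ?n" for i
  proof (rule ccontr)
    assume "\<not> ?thesis"
    then have "u i = 0\<^sub>v ?n" using uc(1)[of i] that by (intro eq_vecI) auto
    then show False using uc(2)[of i] that by auto
  qed
  have detU: "det U \<noteq> 0"
  proof
    assume "det U = 0"
    then obtain v where v: "v \<in> carrier_vec ?n" "v \<noteq> 0\<^sub>v ?n" "U *\<^sub>v v = 0\<^sub>v ?n"
      using det_0_iff_vec_prod_zero_field[OF Uc] by auto
    have z: "(\<Sum>i<?n. v $ i * u i $ k) = 0" if "k < ?n" for k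
    proof -
      have "(U *\<^sub>v v) $ k = (\<Sum>i<?n. U $$ (k,i) * v $ i)" by (rule mult_vec_entry[OF Uc v(1) that])
      moreover have "(U *\<^sub>v v) $ k = 0" using v(3) that by simp
      moreover have "(\<Sum>i<?n. U $$ (k,i) * v $ i) = (\<Sum>i<?n. v $ i * u i $ k)"
        using that by (intro sum.cong refl) (simp add: U_def)
      ultimately show ?thesis by simp
    qed
    have "v $ i = 0" if "i < ?n" for i
      using indep[of ?n X "\<lambda>i l. u i $ l" a ?n "\<lambda>i. v $ i" i] ev nz inj z that
      by (auto simp: lessThan_Suc_atMost)
    then have "v = 0\<^sub>v ?n" using v(1) by (intro eq_vecI) auto
    then show False using v(2) by simp
  qed
  define Ui where "Ui = (1 / det U) \<cdot>\<^sub>m adj_mat U"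
  have Uic: "Ui \<in> carrier_mat ?n ?n" unfolding Ui_def using adj_mat(1)[OF Uc] by simp
  have UUi: "U * Ui = 1\<^sub>m ?n" unfolding Ui_def
    using adj_mat[OF Uc] detU Uc by (simp add: mult_smult_distrib[of _ ?n ?n]) (intro eq_matI, auto)
  have UiU: "Ui * U = 1\<^sub>m ?n" by (rule mat_mult_left_right_inverse[OF Uc Uic UUi])
  have XU: "X * U = U * diagm ?n a"
  proof (rule eq_matI)
    fix k i assume "k < dim_row (U * diagm ?n a)" "i < dim_col (U * diagm ?n a)"
    then have ki: "k < ?n" "i < ?n" using Uc by auto
    have "(X * U) $$ (k,i) = (\<Sum>l<?n. X $$ (k,l) * U $$ (l,i))" by (rule mult_entry[OF X Uc ki])
    also have "\<dots> = a i * u i $ k" using ki ev by (simp add: U_def)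
    also have "\<dots> = (\<Sum>l<?n. U $$ (k,l) * diagm ?n a $$ (l,i))"
      using ki by (simp add: U_def diagm_def if_distrib cong: if_cong)
    also have "\<dots> = (U * diagm ?n a) $$ (k,i)" by (rule mult_entry[symmetric, OF Uc _ ki]) simp
    finally show "(X * U) $$ (k,i) = (U * diagm ?n a) $$ (k,i)" .
  qed (use X Uc in auto)
  show ?thesis using Uc Uic UUi UiU XU by blast
qed

fun projm :: "nat \<Rightarrow> complex mat \<Rightarrow> (nat \<Rightarrow> complex) \<Rightarrow> nat \<Rightarrow> nat \<Rightarrow> complex mat" where
  "projm n X a i 0 = 1\<^sub>m n"
| "projm n X a i (Suc m) = (if m = i then projm n X a i m
     else (1 / (a i - a m)) \<cdot>\<^sub>m ((X - a m \<cdot>\<^sub>m 1\<^sub>m n) * projm n X a i m))"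

lemma projm_carrier: "X \<in> carrier_mat n n \<Longrightarrow> projm n X a i m \<in> carrier_mat n n"
  by (induct m) auto

lemma diagm_mult_entry:
  assumes "M \<in> carrier_mat n n" "k < n" "l < n"
  shows "(diagm n d * M) $$ (k,l) = d k * M $$ (k,l)"
proof -
  have "(diagm n d * M) $$ (k,l) = (\<Sum>j<n. diagm n d $$ (k,j) * M $$ (j,l))"
    by (rule mult_entry[OF diagm_carrier assms(1) assms(2,3)])
  also have "\<dots> = (\<Sum>j<n. if j = k then d k * M $$ (k,l) else 0)"
    using assms by (intro sum.cong refl) (auto simp: diagm_def)
  finally show ?thesis using assms by simp
qed

lemma projK:
  assumes X: "X \<in> carrier_mat n n" and U: "U \<in> carrier_mat n n" and Ui: "Ui \<in> carrier_mat n n"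
  and UUi: "U * Ui = 1\<^sub>m n"
  and left: "\<And>k l. k < n \<Longrightarrow> l < n \<Longrightarrow> (Ui * X) $$ (k,l) = a k * Ui $$ (k,l)"
  and inj: "inj_on a {..<n}" and i: "i < n"
  shows "projm n X a i n = mat n n (\<lambda>(k,l). U $$ (k,i) * Ui $$ (i,l))"
proof -
  define dd where "dd m k = (\<Prod>j\<in>{..<m}-{i}. (a k - a j) / (a i - a j))" for m k
  have step: "Ui * projm n X a i m = diagm n (dd m) * Ui" for m
  proof (induct m)
    case 0
    have "diagm n (dd 0) = 1\<^sub>m n" unfolding dd_def diagm_def by (intro eq_matI) auto
    then show ?case using Ui by simp
  next
    case (Suc m)
    show ?case
    proof (cases "m = i")
      case True
      then have "dd (Suc m) = dd m" unfolding dd_def by (intro ext prod.cong) auto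
      then show ?thesis using True Suc by simp
    next
      case False
      let ?P = "projm n X a i m"
      let ?M = "X - a m \<cdot>\<^sub>m 1\<^sub>m n"
      let ?c = "1 / (a i - a m)"
      have P: "?P \<in> carrier_mat n n" by (rule projm_carrier[OF X])
      have M: "?M \<in> carrier_mat n n" by (intro minus_carrier_mat) simp
      have e1: "Ui * ?M = diagm n (\<lambda>k. a k - a m) * Ui"
      proof (rule eq_matI)
        fix k l assume kl: "k < dim_row (diagm n (\<lambda>k. a k - a m) * Ui)" "l < dim_col (diagm n (\<lambda>k. a k - a m) * Ui)"
        then have kl': "k < n" "l < n" using Ui by auto
        have "(Ui * ?M) $$ (k,l) = (\<Sum>j<n. Ui $$ (k,j) * ?M $$ (j,l))" by (rule mult_entry[OF Ui M kl'])
        also have "\<dots> = (\<Sum>j<n. Ui $$ (k,j) * X $$ (j,l) - (if j = l then a m * Ui $$ (k,l) else 0))"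
          using kl' X by (intro sum.cong refl) (auto simp: algebra_simps)
        also have "\<dots> = (\<Sum>j<n. Ui $$ (k,j) * X $$ (j,l)) - a m * Ui $$ (k,l)"
          using kl' by (simp add: sum_subtractf)
        also have "(\<Sum>j<n. Ui $$ (k,j) * X $$ (j,l)) = (Ui * X) $$ (k,l)"
          by (rule mult_entry[symmetric, OF Ui X kl'])
        also have "\<dots> = a k * Ui $$ (k,l)" by (rule left[OF kl'])
        finally have "(Ui * ?M) $$ (k,l) = (a k - a m) * Ui $$ (k,l)" by (simp add: algebra_simps)
        then show "(Ui * ?M) $$ (k,l) = (diagm n (\<lambda>k. a k - a m) * Ui) $$ (k,l)"
          using diagm_mult_entry[OF Ui kl'] by simp
      qed (use Ui M in auto)
      have "Ui * projm n X a i (Suc m) = Ui * (?c \<cdot>\<^sub>m (?M * ?P))" using False by simp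
      also have "\<dots> = ?c \<cdot>\<^sub>m (Ui * (?M * ?P))" using Ui M P by (simp add: mult_smult_distrib[of _ n n _ n])
      also have "Ui * (?M * ?P) = (Ui * ?M) * ?P" using Ui M P by simp
      also have "\<dots> = diagm n (\<lambda>k. a k - a m) * (Ui * ?P)" unfolding e1 by (rule assoc_mult_mat[OF diagm_carrier Ui P])
      also have "\<dots> = diagm n (\<lambda>k. a k - a m) * (diagm n (dd m) * Ui)" unfolding Suc ..
      also have "?c \<cdot>\<^sub>m \<dots> = diagm n (dd (Suc m)) * Ui"
      proof (rule eq_matI)
        fix k l assume kl: "k < dim_row (diagm n (dd (Suc m)) * Ui)" "l < dim_col (diagm n (dd (Suc m)) * Ui)"
        then have kl': "k < n" "l < n" using Ui by auto
        have "dd (Suc m) k = ?c * (a k - a m) * dd m k"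
        proof -
          have "{..<Suc m}-{i} = insert m ({..<m}-{i})" using False by auto
          then show ?thesis unfolding dd_def by (simp add: prod.insert)
        qed
        moreover have "(?c \<cdot>\<^sub>m (diagm n (\<lambda>k. a k - a m) * (diagm n (dd m) * Ui))) $$ (k,l)
            = ?c * ((diagm n (\<lambda>k. a k - a m) * (diagm n (dd m) * Ui)) $$ (k,l))"
          using kl' Ui by (intro index_smult_mat(1)) auto
        moreover have "(diagm n (\<lambda>k. a k - a m) * (diagm n (dd m) * Ui)) $$ (k,l) = (a k - a m) * (dd m k * Ui $$ (k,l))"
          using kl' Ui by (simp only: diagm_mult_entry mult_carrier_mat[OF diagm_carrier Ui])
        moreover have "(diagm n (dd (Suc m)) * Ui) $$ (k,l) = dd (Suc m) k * Ui $$ (k,l)"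
          using kl' Ui by (simp only: diagm_mult_entry)
        ultimately show "(?c \<cdot>\<^sub>m (diagm n (\<lambda>k. a k - a m) * (diagm n (dd m) * Ui))) $$ (k,l) = (diagm n (dd (Suc m)) * Ui) $$ (k,l)"
          by simp
      qed (use Ui in auto)
      finally show ?thesis .
    qed
  qed
  have ddn: "dd n k = (if k = i then 1 else 0)" if "k < n" for k
  proof (cases "k = i")
    case True then show ?thesis unfolding dd_def using inj i that
      by (simp, intro prod.neutral) (auto simp: inj_on_def)
  next
    case False
    then have "k \<in> {..<n}-{i}" using that by auto
    then show ?thesis using False unfolding dd_def by (auto simp: prod_zero_iff)
  qed
  have Pn: "projm n X a i n \<in> carrier_mat n n" by (rule projm_carrier[OF X])
  have "projm n X a i n = (U * Ui) * projm n X a i n" using UUi Pn by simp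
  also have "\<dots> = U * (Ui * projm n X a i n)" using U Ui Pn by simp
  also have "\<dots> = U * (diagm n (dd n) * Ui)" unfolding step ..
  also have "\<dots> = mat n n (\<lambda>(k,l). U $$ (k,i) * Ui $$ (i,l))"
  proof (rule eq_matI)
    fix k l assume kl: "k < dim_row (mat n n (\<lambda>(k,l). U $$ (k,i) * Ui $$ (i,l)))"
       "l < dim_col (mat n n (\<lambda>(k,l). U $$ (k,i) * Ui $$ (i,l)))"
    then have kl': "k < n" "l < n" by auto
    have "(U * (diagm n (dd n) * Ui)) $$ (k,l) = (\<Sum>t<n. U $$ (k,t) * (diagm n (dd n) * Ui) $$ (t,l))"
      by (rule mult_entry[OF U mult_carrier_mat[OF diagm_carrier Ui] kl'])
    also have "\<dots> = (\<Sum>t<n. if t = i then U $$ (k,i) * Ui $$ (i,l) else 0)"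
      using kl' Ui by (intro sum.cong refl) (auto simp del: index_mult_mat simp: diagm_mult_entry ddn)
    also have "\<dots> = U $$ (k,i) * Ui $$ (i,l)" using i by simp
    finally show "(U * (diagm n (dd n) * Ui)) $$ (k,l) = mat n n (\<lambda>(k,l). U $$ (k,i) * Ui $$ (i,l)) $$ (k,l)"
      using kl' by simp
  qed (use U Ui in auto)
  finally show ?thesis .
qed

lemma trace_proj:
  assumes X: "X \<in> carrier_mat n n" and U: "U \<in> carrier_mat n n" and Ui: "Ui \<in> carrier_mat n n"
  and UUi: "U * Ui = 1\<^sub>m n"
  and left: "\<And>k l. k < n \<Longrightarrow> l < n \<Longrightarrow> (Ui * X) $$ (k,l) = a k * Ui $$ (k,l)"
  and inj: "inj_on a {..<n}" and i: "i < n"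
  shows "(\<Sum>k<n. d k * projm n X a i n $$ (k,k)) = (\<Sum>k<n. d k * U $$ (k,i) * Ui $$ (i,k))"
proof -
  have e: "projm n X a i n = mat n n (\<lambda>(k,l). U $$ (k,i) * Ui $$ (i,l))" by (rule projK[OF assms])
  show ?thesis unfolding e by (intro sum.cong refl) auto
qed

definition dualp :: "nat \<Rightarrow> (nat \<Rightarrow> complex) \<Rightarrow> (nat \<Rightarrow> complex) \<Rightarrow> (nat \<Rightarrow> complex) \<Rightarrow> nat \<Rightarrow> complex" where
  "dualp r g p a i = (\<Sum>k<Suc r. g k * projm (Suc r) (Xm r g p) a i (Suc r) $$ (k,k)) + Cm r a i i"

lemma diagm_index: "i < n \<Longrightarrow> j < n \<Longrightarrow> diagm n d $$ (i,j) = (if i = j then d i else 0)"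
  by (simp add: diagm_def)

lemma mult_diagm_entry:
  assumes "M \<in> carrier_mat n n" "k < n" "l < n"
  shows "(M * diagm n d) $$ (k,l) = M $$ (k,l) * d l"
proof -
  have "(M * diagm n d) $$ (k,l) = (\<Sum>j<n. M $$ (k,j) * diagm n d $$ (j,l))"
    by (rule mult_entry[OF assms(1) diagm_carrier assms(2,3)])
  also have "\<dots> = (\<Sum>j<n. if j = l then M $$ (k,l) * d l else 0)"
    using assms by (intro sum.cong refl) (auto simp: diagm_def)
  finally show ?thesis using assms by simp
qed

lemma char_poly_diagm: "char_poly (diagm (Suc r) g) = (\<Prod>i\<le>r. [:- g i, 1:])"
proof -
  have "upper_triangular (diagm (Suc r) g)" unfolding upper_triangular_def diagm_def by auto
  then have "char_poly (diagm (Suc r) g) = (\<Prod>a\<leftarrow>diag_mat (diagm (Suc r) g). [:- a, 1:])"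
    by (rule char_poly_upper_triangular[OF diagm_carrier])
  also have "diag_mat (diagm (Suc r) g) = map g [0..<Suc r]" unfolding diag_mat_def diagm_def by auto
  finally show ?thesis unfolding map_map prod_list_map_upt by (simp add: lessThan_Suc_atMost)
qed

lemma core:
  assumes injg: "inj_on g {..r}" and inja: "inj_on a {..r}" and W: "Wr r g p a"
  shows "Wr r a (dualp r g p a) g \<and> (\<forall>i\<le>r. dualp r a (dualp r g p a) g i = p i)"
proof -
  define n where "n = Suc r"
  define X where "X = Xm r g p"
  have Xc: "X \<in> carrier_mat n n" unfolding X_def n_def by simp
  have cp: "char_poly X = (\<Prod>i\<le>r. [:- a i, 1:])" using W Wr_iff[OF injg] unfolding X_def by simp
  obtain U Ui where Uc: "U \<in> carrier_mat n n" and Uic: "Ui \<in> carrier_mat n n"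
    and UUi: "U * Ui = 1\<^sub>m n" and UiU: "Ui * U = 1\<^sub>m n" and XU: "X * U = U * diagm n a"
    using eig_exists[OF Xc[unfolded n_def] cp inja] unfolding n_def by blast
  have injg': "inj_on g {..<n}" and inja': "inj_on a {..<n}" using injg inja unfolding n_def lessThan_Suc_atMost by auto
  have Dc: "diagm n a \<in> carrier_mat n n" by simp
  have UiX: "Ui * X = diagm n a * Ui"
  proof -
    have "Ui * X = Ui * (X * (U * Ui))" using UUi Xc by simp
    also have "\<dots> = Ui * ((X * U) * Ui)" using Xc Uc Uic by simp
    also have "\<dots> = (Ui * U) * (diagm n a * Ui)" unfolding XU
      by (simp only: assoc_mult_mat[OF Uc Dc Uic] assoc_mult_mat[OF Uic Uc mult_carrier_mat[OF Dc Uic]])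
    also have "\<dots> = diagm n a * Ui" unfolding UiU using Uic by simp
    finally show ?thesis .
  qed
  have left: "(Ui * X) $$ (k,l) = a k * Ui $$ (k,l)" if "k < n" "l < n" for k l
    unfolding UiX by (rule diagm_mult_entry[OF Uic that])
  have XUe: "(X * U) $$ (l,k) = U $$ (l,k) * a k" if "l < n" "k < n" for l k
    unfolding XU by (rule mult_diagm_entry[OF Uc that])
  define w where "w = wt r g"
  define wa where "wa = wt r a"
  have wnz: "w k \<noteq> 0" if "k < n" for k using wt_nonzero[OF injg] that unfolding w_def n_def by auto
  have wanz: "wa k \<noteq> 0" if "k < n" for k using wt_nonzero[OF inja] that unfolding wa_def n_def by auto
  define Y where "Y = mat n n (\<lambda>(i,k). \<Sum>l<n. Ui $$ (i,l) * g l * U $$ (l,k))"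
  have Yc: "Y \<in> carrier_mat n n" unfolding Y_def by simp
  define f where "f i = (\<Sum>m<n. Ui $$ (i,m) * w m)" for i
  define h where "h k = (\<Sum>l<n. U $$ (l,k) / w l)" for k
  have Xoff: "X $$ (m,l) * (g l - g m) = (if m = l then 0 else w m / w l)" if "m < n" "l < n" for m l
  proof (cases "m = l")
    case False
    have "(g m - g l) * Cm r g m l = w m / w l"
      unfolding w_def by (rule C_offdiag[OF injg False]) (use that n_def in auto)
    then show ?thesis using False that unfolding X_def Xm_def n_def by (simp add: algebra_simps)
  qed simp
  have R: "(a i - a k) * Y $$ (i,k) = f i * h k - (if i = k then 1 else 0)" if ik: "i < n" "k < n" for i k
  proof -
    have e1: "a i * Y $$ (i,k) = (\<Sum>l<n. \<Sum>m<n. Ui $$ (i,m) * X $$ (m,l) * g l * U $$ (l,k))"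
    proof -
      have "a i * Y $$ (i,k) = (\<Sum>l<n. (a i * Ui $$ (i,l)) * g l * U $$ (l,k))"
        using ik by (simp add: Y_def sum_distrib_left ac_simps)
      also have "\<dots> = (\<Sum>l<n. (\<Sum>m<n. Ui $$ (i,m) * X $$ (m,l)) * g l * U $$ (l,k))"
        using ik by (intro sum.cong refl) (simp add: left[symmetric] mult_entry[OF Uic Xc])
      finally show ?thesis by (simp add: sum_distrib_right)
    qed
    have e2: "Y $$ (i,k) * a k = (\<Sum>l<n. \<Sum>m<n. Ui $$ (i,m) * g m * X $$ (m,l) * U $$ (l,k))"
    proof -
      have "Y $$ (i,k) * a k = (\<Sum>m<n. Ui $$ (i,m) * g m * (U $$ (m,k) * a k))"
        using ik by (simp add: Y_def sum_distrib_right sum_distrib_left ac_simps)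
      also have "\<dots> = (\<Sum>m<n. Ui $$ (i,m) * g m * (\<Sum>l<n. X $$ (m,l) * U $$ (l,k)))"
        using ik by (intro sum.cong refl) (simp add: XUe[symmetric] mult_entry[OF Xc Uc])
      also have "\<dots> = (\<Sum>m<n. \<Sum>l<n. Ui $$ (i,m) * g m * X $$ (m,l) * U $$ (l,k))"
        by (simp add: sum_distrib_left ac_simps)
      finally show ?thesis by (subst sum.swap) simp
    qed
    have "(a i - a k) * Y $$ (i,k) = a i * Y $$ (i,k) - Y $$ (i,k) * a k" by (simp add: algebra_simps)
    also have "\<dots> = (\<Sum>l<n. \<Sum>m<n. Ui $$ (i,m) * (X $$ (m,l) * (g l - g m)) * U $$ (l,k))"
      unfolding e1 e2 by (simp add: sum_subtractf[symmetric] algebra_simps)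
    also have "\<dots> = (\<Sum>l<n. \<Sum>m<n. Ui $$ (i,m) * (w m / w l - (if m = l then 1 else 0)) * U $$ (l,k))"
      by (intro sum.cong refl) (simp add: Xoff wnz)
    also have "\<dots> = (\<Sum>l<n. \<Sum>m<n. Ui $$ (i,m) * w m * (U $$ (l,k) / w l)
                   - (if m = l then Ui $$ (i,l) * U $$ (l,k) else 0))"
      by (intro sum.cong refl) (auto simp: algebra_simps)
    also have "\<dots> = (\<Sum>l<n. \<Sum>m<n. Ui $$ (i,m) * w m * (U $$ (l,k) / w l))
                   - (\<Sum>l<n. \<Sum>m<n. if m = l then Ui $$ (i,l) * U $$ (l,k) else 0)"
      by (simp only: sum_subtractf)
    also have "(\<Sum>l<n. \<Sum>m<n. Ui $$ (i,m) * w m * (U $$ (l,k) / w l)) = f i * h k"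
      unfolding f_def h_def by (simp add: sum_distrib_left sum_distrib_right sum_divide_distrib)
    also have "(\<Sum>l<n. \<Sum>m<n. if m = l then Ui $$ (i,l) * U $$ (l,k) else 0) = (Ui * U) $$ (i,k)"
      by (simp add: mult_entry[OF Uic Uc ik])
    finally show ?thesis unfolding UiU using ik by simp
  qed
  have fh: "f i * h i = 1" if "i < n" for i using R[OF that that] by simp
  have fnz: "f i \<noteq> 0" if "i < n" for i using fh[OF that] by auto
  define p' where "p' = dualp r g p a"
  have p'e: "p' i = Y $$ (i,i) + Cm r a i i" if i: "i < n" for i
  proof -
    have "(\<Sum>k<n. g k * projm n X a i n $$ (k,k)) = (\<Sum>k<n. g k * U $$ (k,i) * Ui $$ (i,k))"
      by (rule trace_proj[OF Xc Uc Uic UUi left inja' i])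
    also have "\<dots> = Y $$ (i,i)" using i by (simp add: Y_def ac_simps)
    finally show ?thesis unfolding p'_def dualp_def n_def X_def by simp
  qed
  define dl where "dl k = 1 / (f k * wa k)" for k
  have dlnz: "dl k \<noteq> 0" if "k < n" for k using fnz[OF that] wanz[OF that] unfolding dl_def by simp
  define X' where "X' = Xm r a p'"
  have X'c: "X' \<in> carrier_mat n n" unfolding X'_def n_def by simp
  have X'e: "X' $$ (i,k) = Y $$ (k,i) * dl k / dl i" if ik: "i < n" "k < n" for i k
  proof (cases "i = k")
    case True
    then show ?thesis using ik p'e[OF ik(1)] dlnz[OF ik(1)] unfolding X'_def Xm_def n_def by simp
  next
    case False
    have c1: "(a i - a k) * Cm r a i k = wa i / wa k"
      unfolding wa_def by (rule C_offdiag[OF inja False]) (use ik n_def in auto)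
    have c2: "(a k - a i) * Y $$ (k,i) = f k * h i" using R[OF ik(2) ik(1)] False by simp
    have aik: "a i \<noteq> a k" using inja' ik False unfolding inj_on_def by auto
    then have aki: "a k - a i \<noteq> 0" "a i - a k \<noteq> 0" by auto
    have Cme: "Cm r a i k = wa i / wa k / (a i - a k)" using c1 aki by (subst eq_divide_eq) (simp add: mult.commute)
    have Ye: "Y $$ (k,i) = f k * h i / (a k - a i)" using c2 aki by (subst eq_divide_eq) (simp add: mult.commute)
    have "Y $$ (k,i) * dl k / dl i = (f i * h i) * wa i / ((a k - a i) * wa k)"
      unfolding Ye dl_def using fnz[OF ik(1)] fnz[OF ik(2)] wanz[OF ik(1)] wanz[OF ik(2)] aki
      by (simp add: field_simps)
    also have "\<dots> = - Cm r a i k" unfolding fh[OF ik(1)] Cme using aki wanz[OF ik(2)]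
      by (simp add: field_simps)
    finally show ?thesis using False ik unfolding X'_def Xm_def n_def by simp
  qed
  define Dl where "Dl = diagm n dl"
  define Dli where "Dli = diagm n (\<lambda>k. 1 / dl k)"
  have Dlc: "Dl \<in> carrier_mat n n" "Dli \<in> carrier_mat n n" unfolding Dl_def Dli_def by auto
  have DD1: "Dli * Dl = 1\<^sub>m n"
    by (rule eq_matI) (use dlnz in \<open>auto simp: Dl_def Dli_def diagm_mult_entry diagm_index simp del: index_mult_mat(1)\<close>)
  have DD2: "Dl * Dli = 1\<^sub>m n"
    by (rule eq_matI) (use dlnz in \<open>auto simp: Dl_def Dli_def diagm_mult_entry diagm_index simp del: index_mult_mat(1)\<close>)
  note DD = DD1 DD2
  have YT: "transpose_mat Y \<in> carrier_mat n n" using Yc by simp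
  have X'sim: "X' = Dli * transpose_mat Y * Dl"
  proof (rule eq_matI)
    fix i k assume "i < dim_row (Dli * transpose_mat Y * Dl)" "k < dim_col (Dli * transpose_mat Y * Dl)"
    then have ik: "i < n" "k < n" using Dlc by auto
    have "(Dli * transpose_mat Y * Dl) $$ (i,k) = (Dli * transpose_mat Y) $$ (i,k) * dl k"
      unfolding Dl_def by (rule mult_diagm_entry[OF mult_carrier_mat[OF Dlc(2) YT] ik])
    also have "(Dli * transpose_mat Y) $$ (i,k) = 1 / dl i * transpose_mat Y $$ (i,k)"
      unfolding Dli_def by (rule diagm_mult_entry[OF YT ik])
    finally show "X' $$ (i,k) = (Dli * transpose_mat Y * Dl) $$ (i,k)"
      using ik Yc X'e[OF ik] by simp
  qed (use X'c Dlc in auto)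
  have "similar_mat X' (transpose_mat Y)"
    unfolding similar_mat_def
    by (rule exI[of _ Dli], rule exI[of _ Dl], rule similar_mat_witI[OF DD(1) DD(2) X'sim X'c YT Dlc(2) Dlc(1)])
  then have cp1: "char_poly X' = char_poly Y" using char_poly_similar char_poly_transpose_mat[OF Yc] by metis
  have Ydef2: "Y = Ui * diagm n g * U"
  proof (rule eq_matI)
    fix i k assume "i < dim_row (Ui * diagm n g * U)" "k < dim_col (Ui * diagm n g * U)"
    then have ik: "i < n" "k < n" using Uc Uic by auto
    have "(Ui * diagm n g * U) $$ (i,k) = (\<Sum>l<n. (Ui * diagm n g) $$ (i,l) * U $$ (l,k))"
      by (rule mult_entry[OF mult_carrier_mat[OF Uic diagm_carrier] Uc ik])
    also have "\<dots> = (\<Sum>l<n. Ui $$ (i,l) * g l * U $$ (l,k))"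
      using ik by (intro sum.cong refl) (simp add: mult_diagm_entry[OF Uic] del: index_mult_mat(1))
    finally show "Y $$ (i,k) = (Ui * diagm n g * U) $$ (i,k)" using ik by (simp add: Y_def)
  qed (use Uc Uic Yc in auto)
  have "similar_mat Y (diagm n g)"
    unfolding similar_mat_def
    by (rule exI[of _ Ui], rule exI[of _ U], rule similar_mat_witI[OF UiU UUi Ydef2 Yc diagm_carrier Uic Uc])
  then have "char_poly Y = char_poly (diagm n g)" by (rule char_poly_similar)
  then have cpX': "char_poly (Xm r a p') = (\<Prod>i\<le>r. [:- g i, 1:])"
    using cp1 char_poly_diagm[of r g] unfolding X'_def n_def by simp
  have part1: "Wr r a p' g" using cpX' Wr_iff[OF inja] by simp
  define U2 where "U2 = mat n n (\<lambda>(k,l). U $$ (l,k) / dl k)"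
  define Ui2 where "Ui2 = mat n n (\<lambda>(k,l). Ui $$ (l,k) * dl l)"
  have U2c: "U2 \<in> carrier_mat n n" "Ui2 \<in> carrier_mat n n" unfolding U2_def Ui2_def by auto
  have U2Ui2: "U2 * Ui2 = 1\<^sub>m n"
  proof (rule eq_matI)
    fix k l assume "k < dim_row (1\<^sub>m n :: complex mat)" "l < dim_col (1\<^sub>m n :: complex mat)"
    then have kl: "k < n" "l < n" by auto
    have "(U2 * Ui2) $$ (k,l) = (\<Sum>m<n. U2 $$ (k,m) * Ui2 $$ (m,l))" by (rule mult_entry[OF U2c kl])
    also have "\<dots> = dl l / dl k * (\<Sum>m<n. Ui $$ (l,m) * U $$ (m,k))"
      using kl by (simp add: U2_def Ui2_def sum_distrib_left ac_simps)
    also have "(\<Sum>m<n. Ui $$ (l,m) * U $$ (m,k)) = (Ui * U) $$ (l,k)" by (rule mult_entry[symmetric, OF Uic Uc kl(2,1)])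
    finally show "(U2 * Ui2) $$ (k,l) = 1\<^sub>m n $$ (k,l)" unfolding UiU using kl dlnz[OF kl(1)] by auto
  qed (use U2c in auto)
  have YUi: "Y * Ui = Ui * diagm n g"
  proof -
    have "Y * Ui = Ui * diagm n g * (U * Ui)" unfolding Ydef2
      by (rule assoc_mult_mat[OF mult_carrier_mat[OF Uic diagm_carrier] Uc Uic])
    then show ?thesis unfolding UUi using Uic by simp
  qed
  have left2: "(Ui2 * X') $$ (k,l) = g k * Ui2 $$ (k,l)" if kl: "k < n" "l < n" for k l
  proof -
    have "(Ui2 * X') $$ (k,l) = (\<Sum>m<n. Ui2 $$ (k,m) * X' $$ (m,l))" by (rule mult_entry[OF U2c(2) X'c kl])
    also have "\<dots> = (\<Sum>m<n. dl l * (Y $$ (l,m) * Ui $$ (m,k)))"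
      using kl dlnz by (intro sum.cong refl) (auto simp: Ui2_def X'e)
    also have "\<dots> = dl l * (Y * Ui) $$ (l,k)" by (simp add: sum_distrib_left mult_entry[OF Yc Uic kl(2,1)])
    also have "(Y * Ui) $$ (l,k) = Ui $$ (l,k) * g k" unfolding YUi by (rule mult_diagm_entry[OF Uic kl(2,1)])
    finally show ?thesis using kl by (simp add: Ui2_def)
  qed
  have XUDUi: "X = U * diagm n a * Ui"
  proof -
    have "X = X * (U * Ui)" unfolding UUi using Xc by simp
    also have "\<dots> = U * diagm n a * Ui" unfolding XU[symmetric] by (rule assoc_mult_mat[symmetric, OF Xc Uc Uic])
    finally show ?thesis .
  qed
  have part2: "dualp r a p' g i = p i" if i: "i \<le> r" for i
  proof -
    have i': "i < n" using i n_def by simp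
    have "(\<Sum>k<n. a k * projm n X' g i n $$ (k,k)) = (\<Sum>k<n. a k * U2 $$ (k,i) * Ui2 $$ (i,k))"
      by (rule trace_proj[OF X'c U2c U2Ui2 left2 injg' i'])
    also have "\<dots> = (\<Sum>k<n. (U * diagm n a) $$ (i,k) * Ui $$ (k,i))"
      using i' dlnz by (intro sum.cong refl) (auto simp: U2_def Ui2_def mult_diagm_entry[OF Uc] simp del: index_mult_mat(1))
    also have "\<dots> = X $$ (i,i)" unfolding XUDUi by (rule mult_entry[symmetric, OF mult_carrier_mat[OF Uc diagm_carrier] Uic i' i'])
    also have "\<dots> = p i - Cm r g i i" using i' unfolding X_def Xm_def n_def by simp
    finally show ?thesis unfolding dualp_def X'_def n_def by simp
  qed
  show ?thesis using part1 part2 unfolding p'_def by blast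
qed

definition rat_on :: "(var \<Rightarrow> complex) set \<Rightarrow> ((var \<Rightarrow> complex) \<Rightarrow> complex) \<Rightarrow> bool" where
  "rat_on S f \<longleftrightarrow> (\<exists>g\<in>polyfun. \<exists>h\<in>polyfun. \<forall>v\<in>S. h v \<noteq> 0 \<and> f v = g v / h v)"

lemma rat_poly: "g \<in> polyfun \<Longrightarrow> rat_on S g"
  unfolding rat_on_def by (rule bexI[of _ g], rule bexI[of _ "\<lambda>v. 1"]) (auto intro: polyfun.const)

lemma rat_const: "rat_on S (\<lambda>v. c)" by (rule rat_poly) (rule polyfun.const)
lemma rat_coord: "rat_on S (\<lambda>v. v k)" by (rule rat_poly) (rule polyfun.coord)

lemma rat_cong: "(\<And>v. v \<in> S \<Longrightarrow> f v = g v) \<Longrightarrow> rat_on S g \<Longrightarrow> rat_on S f"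
  unfolding rat_on_def by metis

lemma rat_add: assumes "rat_on S f" "rat_on S g" shows "rat_on S (\<lambda>v. f v + g v)"
proof -
  obtain a b where ab: "a \<in> polyfun" "b \<in> polyfun" "\<forall>v\<in>S. b v \<noteq> 0 \<and> f v = a v / b v"
    using assms(1) unfolding rat_on_def by blast
  obtain c d where cd: "c \<in> polyfun" "d \<in> polyfun" "\<forall>v\<in>S. d v \<noteq> 0 \<and> g v = c v / d v"
    using assms(2) unfolding rat_on_def by blast
  have P1: "(\<lambda>v. a v * d v + c v * b v) \<in> polyfun" using ab cd by (intro polyfun.add polyfun.mult)
  have P2: "(\<lambda>v. b v * d v) \<in> polyfun" using ab cd by (intro polyfun.mult)
  have key: "\<forall>v\<in>S. b v * d v \<noteq> 0 \<and> f v + g v = (a v * d v + c v * b v) / (b v * d v)"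
    using ab(3) cd(3) by (auto simp: field_simps)
  show ?thesis unfolding rat_on_def by (rule bexI[OF _ P1], rule bexI[OF _ P2]) (use key in auto)
qed

lemma rat_mult: assumes "rat_on S f" "rat_on S g" shows "rat_on S (\<lambda>v. f v * g v)"
proof -
  obtain a b where ab: "a \<in> polyfun" "b \<in> polyfun" "\<forall>v\<in>S. b v \<noteq> 0 \<and> f v = a v / b v"
    using assms(1) unfolding rat_on_def by blast
  obtain c d where cd: "c \<in> polyfun" "d \<in> polyfun" "\<forall>v\<in>S. d v \<noteq> 0 \<and> g v = c v / d v"
    using assms(2) unfolding rat_on_def by blast
  have P1: "(\<lambda>v. a v * c v) \<in> polyfun" using ab cd by (intro polyfun.mult)
  have P2: "(\<lambda>v. b v * d v) \<in> polyfun" using ab cd by (intro polyfun.mult)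
  have key: "\<forall>v\<in>S. b v * d v \<noteq> 0 \<and> f v * g v = (a v * c v) / (b v * d v)"
    using ab(3) cd(3) by (auto simp: field_simps)
  show ?thesis unfolding rat_on_def by (rule bexI[OF _ P1], rule bexI[OF _ P2]) (use key in auto)
qed

lemma rat_div: assumes "rat_on S f" "rat_on S g" "\<And>v. v \<in> S \<Longrightarrow> g v \<noteq> 0"
  shows "rat_on S (\<lambda>v. f v / g v)"
proof -
  obtain a b where ab: "a \<in> polyfun" "b \<in> polyfun" "\<forall>v\<in>S. b v \<noteq> 0 \<and> f v = a v / b v"
    using assms(1) unfolding rat_on_def by blast
  obtain c d where cd: "c \<in> polyfun" "d \<in> polyfun" "\<forall>v\<in>S. d v \<noteq> 0 \<and> g v = c v / d v"
    using assms(2) unfolding rat_on_def by blast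
  have P1: "(\<lambda>v. a v * d v) \<in> polyfun" using ab cd by (intro polyfun.mult)
  have P2: "(\<lambda>v. b v * c v) \<in> polyfun" using ab cd by (intro polyfun.mult)
  have key: "\<forall>v\<in>S. b v * c v \<noteq> 0 \<and> f v / g v = (a v * d v) / (b v * c v)"
  proof
    fix v assume v: "v \<in> S"
    then have "c v \<noteq> 0" using assms(3)[OF v] cd(3) by auto
    then show "b v * c v \<noteq> 0 \<and> f v / g v = (a v * d v) / (b v * c v)"
      using ab(3) cd(3) v by (auto simp: field_simps)
  qed
  show ?thesis unfolding rat_on_def by (rule bexI[OF _ P1], rule bexI[OF _ P2]) (use key in auto)
qed

lemma rat_minus: assumes "rat_on S f" "rat_on S g" shows "rat_on S (\<lambda>v. f v - g v)"
proof -
  have "rat_on S (\<lambda>v. f v + (-1) * g v)" by (intro rat_add rat_mult rat_const assms)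
  then show ?thesis by (rule rat_cong[rotated]) simp
qed

lemma rat_sum: "finite I \<Longrightarrow> (\<And>i. i \<in> I \<Longrightarrow> rat_on S (f i)) \<Longrightarrow> rat_on S (\<lambda>v. \<Sum>i\<in>I. f i v)"
proof (induct I rule: finite_induct)
  case empty then show ?case by (simp add: rat_const)
next
  case (insert x F)
  then have "rat_on S (\<lambda>v. f x v + (\<Sum>i\<in>F. f i v))" by (intro rat_add) auto
  then show ?case using insert by simp
qed

lemma rat_prod: "finite I \<Longrightarrow> (\<And>i. i \<in> I \<Longrightarrow> rat_on S (f i)) \<Longrightarrow> rat_on S (\<lambda>v. \<Prod>i\<in>I. f i v)"
proof (induct I rule: finite_induct)
  case empty then show ?case by (simp add: rat_const)
next
  case (insert x F)
  then have "rat_on S (\<lambda>v. f x v * (\<Prod>i\<in>F. f i v))" by (intro rat_mult) auto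
  then show ?case using insert by simp
qed

lemma rat_comp: "g \<in> polyfun \<Longrightarrow> (\<And>k. rat_on S (\<lambda>v. \<psi> v k)) \<Longrightarrow> rat_on S (\<lambda>v. g (\<psi> v))"
proof (induct g rule: polyfun.induct)
  case (const c) show ?case by (rule rat_const)
next
  case (coord k) then show ?case by simp
next
  case (add f g) then show ?case by (intro rat_add) auto
next
  case (mult f g) then show ?case by (intro rat_mult) auto
qed

context
  fixes S :: "(var \<Rightarrow> complex) set" and r :: nat
begin

lemma rat_if: "rat_on S f \<Longrightarrow> rat_on S h \<Longrightarrow> rat_on S (\<lambda>v. if c then f v else h v)"
  by (cases c) auto

lemma rat_wt:
  assumes rg: "\<And>j. rat_on S (\<lambda>v. g v j)"
  shows "rat_on S (\<lambda>v. wt r (g v) k)"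
  unfolding wt_def by (intro rat_prod rat_minus rg) auto

lemma rat_Cm:
  assumes injg: "\<And>v. v \<in> S \<Longrightarrow> inj_on (g v) {..r}"
  and rg: "\<And>j. rat_on S (\<lambda>v. g v j)" and k: "k \<le> r"
  shows "rat_on S (\<lambda>v. Cm r (g v) i k)"
proof -
  have "rat_on S (\<lambda>v. (\<Sum>m\<in>{..r}-{k}. \<Prod>l\<in>{..r}-{k}-{m}. g v i - g v l) / wt r (g v) k)"
    by (intro rat_div rat_sum rat_prod rat_minus rg rat_wt) (use wt_nonzero[OF injg k] in auto)
  then show ?thesis unfolding Cm_def poly_pderiv_Lpoly .
qed

lemma rat_Xm:
  assumes injg: "\<And>v. v \<in> S \<Longrightarrow> inj_on (g v) {..r}"
  and rg: "\<And>j. rat_on S (\<lambda>v. g v j)" and rp: "\<And>j. rat_on S (\<lambda>v. p v j)"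
  and ik: "i < Suc r" "k < Suc r"
  shows "rat_on S (\<lambda>v. Xm r (g v) (p v) $$ (i,k))"
proof -
  have "rat_on S (\<lambda>v. if i = k then p v i else 0)" by (cases "i = k") (auto simp: rp rat_const)
  then have "rat_on S (\<lambda>v. (if i = k then p v i else 0) - Cm r (g v) i k)"
    using ik by (intro rat_minus rat_Cm[OF injg rg]) auto
  then show ?thesis using ik by (simp add: Xm_def)
qed

lemma projm_step_entry:
  fixes X :: "complex mat"
  assumes X: "X \<in> carrier_mat n n" and PP: "PP \<in> carrier_mat n n" and kl: "k < n" "l < n"
  shows "(c \<cdot>\<^sub>m ((X - b \<cdot>\<^sub>m 1\<^sub>m n) * PP)) $$ (k,l) = c * (\<Sum>t<n. (X $$ (k,t) - (if k = t then b else 0)) * PP $$ (t,l))"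
proof -
  have M: "X - b \<cdot>\<^sub>m 1\<^sub>m n \<in> carrier_mat n n" by (intro minus_carrier_mat) simp
  have "((X - b \<cdot>\<^sub>m 1\<^sub>m n) * PP) $$ (k,l) = (\<Sum>t<n. (X - b \<cdot>\<^sub>m 1\<^sub>m n) $$ (k,t) * PP $$ (t,l))"
    by (rule mult_entry[OF M PP kl])
  also have "\<dots> = (\<Sum>t<n. (X $$ (k,t) - (if k = t then b else 0)) * PP $$ (t,l))"
    using kl by (intro sum.cong refl) auto
  finally show ?thesis using kl PP M by simp
qed

lemma rat_projm:
  assumes injg: "\<And>v. v \<in> S \<Longrightarrow> inj_on (g v) {..r}"
  and inja: "\<And>v. v \<in> S \<Longrightarrow> inj_on (a v) {..r}"
  and rg: "\<And>j. rat_on S (\<lambda>v. g v j)" and rp: "\<And>j. rat_on S (\<lambda>v. p v j)"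
  and ra: "\<And>j. rat_on S (\<lambda>v. a v j)" and i: "i \<le> r"
  shows "m \<le> Suc r \<Longrightarrow> k < Suc r \<Longrightarrow> l < Suc r \<Longrightarrow>
    rat_on S (\<lambda>v. projm (Suc r) (Xm r (g v) (p v)) (a v) i m $$ (k,l))"
proof (induct m arbitrary: k l)
  case 0
  then show ?case by (simp add: rat_const)
next
  case (Suc m)
  show ?case
  proof (cases "m = i")
    case True
    then show ?thesis using Suc by simp
  next
    case False
    have e: "projm (Suc r) (Xm r (g v) (p v)) (a v) i (Suc m) $$ (k,l) =
      1 / (a v i - a v m) * (\<Sum>t<Suc r. (Xm r (g v) (p v) $$ (k,t) - (if k = t then a v m else 0)) *
          projm (Suc r) (Xm r (g v) (p v)) (a v) i m $$ (t,l))" for v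
      using False Suc.prems by (simp only: projm.simps if_False, intro projm_step_entry projm_carrier) auto
    have nz: "a v i - a v m \<noteq> 0" if "v \<in> S" for v
      using inja[OF that] False i Suc.prems(1) unfolding inj_on_def by auto
    have nz': "a v i = a v m \<Longrightarrow> v \<notin> S" for v using nz by auto
    have "rat_on S (\<lambda>v. 1 / (a v i - a v m) * (\<Sum>t<Suc r. (Xm r (g v) (p v) $$ (k,t) - (if k = t then a v m else 0)) *
          projm (Suc r) (Xm r (g v) (p v)) (a v) i m $$ (t,l)))"
      using Suc.prems
      by (intro rat_mult rat_div rat_const rat_minus ra rat_sum rat_Xm[OF injg rg rp] Suc.hyps)
         (auto simp: rat_const ra intro!: rat_if dest: nz')
    then show ?thesis unfolding e .
  qed
qed

lemma rat_dualp:
  assumes injg: "\<And>v. v \<in> S \<Longrightarrow> inj_on (g v) {..r}"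
  and inja: "\<And>v. v \<in> S \<Longrightarrow> inj_on (a v) {..r}"
  and rg: "\<And>j. rat_on S (\<lambda>v. g v j)" and rp: "\<And>j. rat_on S (\<lambda>v. p v j)"
  and ra: "\<And>j. rat_on S (\<lambda>v. a v j)" and i: "i \<le> r"
  shows "rat_on S (\<lambda>v. dualp r (g v) (p v) (a v) i)"
  unfolding dualp_def
  by (intro rat_add rat_sum rat_mult rg rat_projm[OF injg inja rg rp ra i] rat_Cm[OF inja ra i]) auto

end

lemma Fun_alt: "Fun S = {f. (\<forall>v. v \<notin> S \<longrightarrow> f v = 0) \<and> rat_on S f}"
  unfolding Fun_def rat_on_def by simp

lemma Fun_map:
  assumes psiS: "\<And>w. w \<in> S' \<Longrightarrow> \<psi> w \<in> S"
  and rpsi: "\<And>k. rat_on S' (\<lambda>w. \<psi> w k)"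
  and f: "f \<in> Fun S"
  shows "restr S' (\<lambda>w. f (\<psi> w)) \<in> Fun S'"
proof -
  obtain g h where gh: "g \<in> polyfun" "h \<in> polyfun" "\<forall>v\<in>S. h v \<noteq> 0 \<and> f v = g v / h v"
    using f unfolding Fun_def by blast
  have "rat_on S' (\<lambda>w. g (\<psi> w) / h (\<psi> w))"
    by (intro rat_div rat_comp[OF gh(1)] rat_comp[OF gh(2)] rpsi) (use gh(3) psiS in auto)
  then have "rat_on S' (restr S' (\<lambda>w. f (\<psi> w)))"
    by (rule rat_cong[rotated]) (use gh(3) psiS in \<open>auto simp: restr_def\<close>)
  then show ?thesis unfolding Fun_alt by (auto simp: restr_def)
qed

lemma iso_from_maps:
  assumes phiS: "\<And>v. v \<in> S \<Longrightarrow> \<phi> v \<in> S'"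
  and psiS: "\<And>w. w \<in> S' \<Longrightarrow> \<psi> w \<in> S"
  and psiphi: "\<And>v. v \<in> S \<Longrightarrow> \<psi> (\<phi> v) = v"
  and phipsi: "\<And>w. w \<in> S' \<Longrightarrow> \<phi> (\<psi> w) = w"
  and rphi: "\<And>k. rat_on S (\<lambda>v. \<phi> v k)"
  and rpsi: "\<And>k. rat_on S' (\<lambda>w. \<psi> w k)"
  and fixG: "\<And>w i. w \<in> S' \<Longrightarrow> \<psi> w (G i) = w (G i)"
  and fixA: "\<And>w i. w \<in> S' \<Longrightarrow> \<psi> w (A i) = w (A i)"
  shows "\<exists>T. Fun_iso S S' T r"
proof -
  define T where "T f = restr S' (\<lambda>w. f (\<psi> w))" for f :: "(var \<Rightarrow> complex) \<Rightarrow> complex"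
  define T' where "T' f = restr S (\<lambda>v. f (\<phi> v))" for f :: "(var \<Rightarrow> complex) \<Rightarrow> complex"
  have TF: "T f \<in> Fun S'" if "f \<in> Fun S" for f unfolding T_def by (rule Fun_map[OF psiS rpsi that])
  have T'F: "T' f \<in> Fun S" if "f \<in> Fun S'" for f unfolding T'_def by (rule Fun_map[OF phiS rphi that])
  have z: "f v = 0" if "f \<in> Fun X" "v \<notin> X" for f v X using that unfolding Fun_def by auto
  have bij: "bij_betw T (Fun S) (Fun S')"
  proof (rule bij_betw_byWitness[where f' = T'])
    show "\<forall>f\<in>Fun S. T' (T f) = f"
    proof
      fix f assume f: "f \<in> Fun S"
      show "T' (T f) = f"
      proof
        fix v show "T' (T f) v = f v"
          using z[OF f, of v] phiS psiphi unfolding T_def T'_def restr_def by auto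
      qed
    qed
    show "\<forall>f\<in>Fun S'. T (T' f) = f"
    proof
      fix f assume f: "f \<in> Fun S'"
      show "T (T' f) = f"
      proof
        fix w show "T (T' f) w = f w"
          using z[OF f, of w] psiS phipsi unfolding T_def T'_def restr_def by auto
      qed
    qed
  qed (use TF T'F in auto)
  have "Fun_iso S S' T r"
    unfolding Fun_iso_def
  proof (intro conjI allI ballI impI)
    show "bij_betw T (Fun S) (Fun S')" by (rule bij)
    show "T (\<lambda>v. f v + g v) = (\<lambda>v. T f v + T g v)" for f g unfolding T_def restr_def by auto
    show "T (\<lambda>v. f v * g v) = (\<lambda>v. T f v * T g v)" for f g unfolding T_def restr_def by auto
    show "T (restr S (\<lambda>v. c)) = restr S' (\<lambda>v. c)" for c
      unfolding T_def restr_def using psiS by auto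
    show "T (restr S (\<lambda>v. v (G i))) = restr S' (\<lambda>v. v (G i))" for i
      unfolding T_def restr_def using psiS fixG by auto
    show "T (restr S (\<lambda>v. v (A i))) = restr S' (\<lambda>v. v (A i))" for i
      unfolding T_def restr_def using psiS fixA by auto
  qed
  then show ?thesis by blast
qed

lemma Xm_cong: "(\<And>i. i \<le> r \<Longrightarrow> p i = q i) \<Longrightarrow> Xm r g p = Xm r g q"
  unfolding Xm_def by (intro eq_matI) auto

lemma dualp_cong: "(\<And>i. i \<le> r \<Longrightarrow> p i = q i) \<Longrightarrow> dualp r g p a i = dualp r g q a i"
  unfolding dualp_def using Xm_cong[of r p q g] by simp

lemma Wr_cong: assumes "\<And>i. i \<le> r \<Longrightarrow> p i = q i" shows "Wr r g p a = Wr r g q a"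
proof -
  have "twisted_wronskian r g p = twisted_wronskian r g q"
    unfolding twisted_wronskian_def using assms
    by (intro arg_cong[where f = det] eq_matI) auto
  then show ?thesis unfolding Wr_def by simp
qed

definition sw :: "(var \<Rightarrow> complex) \<Rightarrow> var \<Rightarrow> complex" where
  "sw v = (\<lambda>k. case k of G i \<Rightarrow> v (A i) | P i \<Rightarrow> v (P i) | A i \<Rightarrow> v (G i))"

definition phi :: "nat \<Rightarrow> (var \<Rightarrow> complex) \<Rightarrow> var \<Rightarrow> complex" where
  "phi r v = (\<lambda>k. case k of G i \<Rightarrow> v (G i)
      | P i \<Rightarrow> (if i \<le> r then dualp r (\<lambda>j. v (G j)) (\<lambda>j. v (P j)) (\<lambda>j. v (A j)) i else 0)
      | A i \<Rightarrow> v (A i))"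

lemma sw_simps[simp]: "sw v (G i) = v (A i)" "sw v (A i) = v (G i)" "sw v (P i) = v (P i)"
  by (simp_all add: sw_def)

lemma phi_simps[simp]: "phi r v (G i) = v (G i)" "phi r v (A i) = v (A i)"
  "phi r v (P i) = (if i \<le> r then dualp r (\<lambda>j. v (G j)) (\<lambda>j. v (P j)) (\<lambda>j. v (A j)) i else 0)"
  by (simp_all add: phi_def)

lemma sw_sw[simp]: "sw (sw v) = v"
proof
  fix k show "sw (sw v) k = v k" by (cases k) auto
qed

lemma sw_mem: "sw w \<in> rOp r \<longleftrightarrow> w \<in> rOp_dual r"
proof -
  have "(\<forall>k. \<not> used_var r k \<longrightarrow> sw w k = 0) \<longleftrightarrow> (\<forall>k. \<not> used_var r k \<longrightarrow> w k = 0)"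
  proof
    assume h: "\<forall>k. \<not> used_var r k \<longrightarrow> sw w k = 0"
    show "\<forall>k. \<not> used_var r k \<longrightarrow> w k = 0"
    proof (intro allI impI)
      fix k assume "\<not> used_var r k"
      then show "w k = 0" using h by (cases k) (metis sw_simps used_var.simps)+
    qed
  next
    assume h: "\<forall>k. \<not> used_var r k \<longrightarrow> w k = 0"
    show "\<forall>k. \<not> used_var r k \<longrightarrow> sw w k = 0"
    proof (intro allI impI)
      fix k assume "\<not> used_var r k"
      then show "sw w k = 0" using h by (cases k) (metis sw_simps used_var.simps)+
    qed
  qed
  then show ?thesis unfolding rOp_def rOp_dual_def by auto
qed

lemma rOp_inj: "v \<in> rOp r \<Longrightarrow> inj_on (\<lambda>i. v (G i)) {..r} \<and> inj_on (\<lambda>i. v (A i)) {..r}"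
  unfolding rOp_def by auto

lemma rOp_dual_inj: "v \<in> rOp_dual r \<Longrightarrow> inj_on (\<lambda>i. v (G i)) {..r} \<and> inj_on (\<lambda>i. v (A i)) {..r}"
  unfolding rOp_dual_def by auto

lemma phi_mem: assumes v: "v \<in> rOp r" shows "phi r v \<in> rOp_dual r"
proof -
  let ?g = "\<lambda>j. v (G j)" and ?p = "\<lambda>j. v (P j)" and ?a = "\<lambda>j. v (A j)"
  have v0: "\<And>k. \<not> used_var r k \<Longrightarrow> v k = 0" and injg: "inj_on ?g {..r}" and inja: "inj_on ?a {..r}"
    and W: "Wr r ?g ?p ?a" using v unfolding rOp_def by auto
  have c: "Wr r ?a (dualp r ?g ?p ?a) ?g" using core[OF injg inja W] by blast
  have W': "Wr r ?a (\<lambda>i. phi r v (P i)) ?g"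
    using c by (subst Wr_cong[where q = "dualp r ?g ?p ?a"]) auto
  have "\<forall>k. \<not> used_var r k \<longrightarrow> phi r v k = 0"
  proof (intro allI impI)
    fix k assume "\<not> used_var r k"
    then show "phi r v k = 0" using v0 by (cases k) auto
  qed
  then show ?thesis unfolding rOp_dual_def using injg inja W' by auto
qed

lemma phi_inv: assumes v: "v \<in> rOp r" shows "phi r (sw (phi r v)) = sw v"
proof
  let ?g = "\<lambda>j. v (G j)" and ?p = "\<lambda>j. v (P j)" and ?a = "\<lambda>j. v (A j)"
  have v0: "\<And>k. \<not> used_var r k \<Longrightarrow> v k = 0" and injg: "inj_on ?g {..r}" and inja: "inj_on ?a {..r}"
    and W: "Wr r ?g ?p ?a" using v unfolding rOp_def by auto
  have c: "\<And>i. i \<le> r \<Longrightarrow> dualp r ?a (dualp r ?g ?p ?a) ?g i = v (P i)" using core[OF injg inja W] by blast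
  fix k show "phi r (sw (phi r v)) k = sw v k"
  proof (cases k)
    case (P i)
    show ?thesis
    proof (cases "i \<le> r")
      case True
      have "dualp r ?a (\<lambda>j. phi r v (P j)) ?g i = dualp r ?a (dualp r ?g ?p ?a) ?g i"
        by (rule dualp_cong) auto
      then show ?thesis using P True c[OF True] by simp
    next
      case False
      then show ?thesis using P v0[of "P i"] by simp
    qed
  qed auto
qed

theorem mainTheorem7:
  fixes r :: nat
  assumes "r \<ge> 1"
  shows "\<exists>T. Fun_iso (rOp r) (rOp_dual r) T r"
proof (rule iso_from_maps[where \<phi> = "phi r" and \<psi> = "\<lambda>w. sw (phi r (sw w))"])
  show "phi r v \<in> rOp_dual r" if "v \<in> rOp r" for v by (rule phi_mem[OF that])
  show "sw (phi r (sw w)) \<in> rOp r" if "w \<in> rOp_dual r" for w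
    using phi_mem[of "sw w" r] that sw_mem[of w r] sw_mem[of "phi r (sw w)" r] by simp
  show "sw (phi r (sw (phi r v))) = v" if "v \<in> rOp r" for v
    using phi_inv[OF that] by simp
  show "phi r (sw (phi r (sw w))) = w" if "w \<in> rOp_dual r" for w
    using phi_inv[of "sw w" r] that sw_mem[of w r] by simp
  show "rat_on (rOp r) (\<lambda>v. phi r v k)" for k
  proof (cases k)
    case (P i)
    show ?thesis
    proof (cases "i \<le> r")
      case True
      have "rat_on (rOp r) (\<lambda>v. dualp r (\<lambda>j. v (G j)) (\<lambda>j. v (P j)) (\<lambda>j. v (A j)) i)"
        by (intro rat_dualp rat_coord True) (auto dest: rOp_inj)
      then show ?thesis using P True by simp
    qed (use P in \<open>simp add: rat_const\<close>)
  qed (auto intro: rat_coord)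
  show "rat_on (rOp_dual r) (\<lambda>w. sw (phi r (sw w)) k)" for k
  proof (cases k)
    case (P i)
    show ?thesis
    proof (cases "i \<le> r")
      case True
      have "rat_on (rOp_dual r) (\<lambda>w. dualp r (\<lambda>j. w (A j)) (\<lambda>j. w (P j)) (\<lambda>j. w (G j)) i)"
        by (intro rat_dualp rat_coord True) (auto dest: rOp_dual_inj)
      then show ?thesis using P True by simp
    qed (use P in \<open>simp add: rat_const\<close>)
  qed (auto intro: rat_coord)
  show "sw (phi r (sw w)) (G i) = w (G i)" for w i by simp
  show "sw (phi r (sw w)) (A i) = w (A i)" for w i by simp
qed

end
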